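(* Let $M=(S,\mathrm{Act},P)$ be an MDP and $T\subseteq S$. Let $(x,r)\in[0,1]^S\times\mathbb{N}_\infty^S$ satisfy: (1) $D^{\min}_x(r)\le r$; (2) $x\le B^{\max}(x)$; (3) for all $s\in S\setminus T$, $x(s)>0$ implies $r(s)<\infty$ (inequalities pointwise). Then $\Pr^{\max}_s(\Diamond T)\ge x(s)$ for all $s\in S$.
   Context: An MDP is a tuple $M=(S,\mathrm{Act},P)$ with $S$ finite, $\mathrm{Act}$ finite, $P\colon S\times\mathrm{Act}\times S\to[0,1]$ with $\sum_{s'}P(s,a,s')\in\{0,1\}$; $\mathrm{Act}(s)=\{a\mid\sum_{s'}P(s,a,s')=1\}$ is nonempty for all $s$; $\mathrm{Post}(s,a)=\{s'\mid P(s,a,s')>0\}$. A strategy is $\sigma\colon S\to\mathrm{Act}$ with $\sigma(s)\in\mathrm{Act}(s)$, inducing a Markov chain with transitions $P(s,\sigma(s),\cdot)$; $\Pr^\sigma_s(\Diamond T)$ is the probability of visiting $T$ from $s$ and $\Pr^{\max}_s(\Diamond T)=\max_\sigma\Pr^\sigma_s(\Diamond T)$. $B^{\max}(x)(s)=1$ for $s\in T$ and $\max_{a\in\mathrm{Act}(s)}\sum_{s'\in\mathrm{Post}(s,a)}P(s,a,s')x(s')$ for $s\notin T$. The $x$-increasing actions of $s$ are $\mathrm{Act}_x(s)=\{a\in\mathrm{Act}(s)\mid x(s)\le\sum_{s'\in\mathrm{Post}(s,a)}P(s,a,s')x(s')\}$. $\mathbb{N}_\infty=\mathbb{N}\cup\{\infty\}$,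 $1+\infty=\infty$, minimum over the empty set is $\infty$. The operator $D^{\min}_x\colon\mathbb{N}_\infty^S\to\mathbb{N}_\infty^S$ is $D^{\min}_x(r)(s)=0$ for $s\in T$ and $1+\min_{a\in\mathrm{Act}_x(s)}\min_{s'\in\mathrm{Post}(s,a)}r(s')$ for $s\notin T$. *)

theory Defs
  imports Complex_Main "HOL-Library.Extended_Nat"
begin

definition is_mdp :: "('s::finite \<Rightarrow> 'a::finite \<Rightarrow> 's \<Rightarrow> real) \<Rightarrow> bool" where
  "is_mdp P \<longleftrightarrow>
     (\<forall>s a s'. 0 \<le> P s a s' \<and> P s a s' \<le> 1) \<and>
     (\<forall>s a. (\<Sum>s'\<in>UNIV. P s a s') \<in> {0, 1}) \<and>
     (\<forall>s. \<exists>a. (\<Sum>s'\<in>UNIV. P s a s') = 1)"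

definition Act :: "('s::finite \<Rightarrow> 'a::finite \<Rightarrow> 's \<Rightarrow> real) \<Rightarrow> 's \<Rightarrow> 'a set" where
  "Act P s = {a. (\<Sum>s'\<in>UNIV. P s a s') = 1}"

definition Post :: "('s::finite \<Rightarrow> 'a::finite \<Rightarrow> 's \<Rightarrow> real) \<Rightarrow> 's \<Rightarrow> 'a \<Rightarrow> 's set" where
  "Post P s a = {s'. P s a s' > 0}"

definition is_strategy :: "('s::finite \<Rightarrow> 'a::finite \<Rightarrow> 's \<Rightarrow> real) \<Rightarrow> ('s \<Rightarrow> 'a) \<Rightarrow> bool" where
  "is_strategy P \<sigma> \<longleftrightarrow> (\<forall>s. \<sigma> s \<in> Act P s)"

fun reach_within :: "('s::finite \<Rightarrow> 'a::finite \<Rightarrow> 's \<Rightarrow> real) \<Rightarrow> ('s \<Rightarrow> 'a) \<Rightarrow> 's set \<Rightarrow> nat \<Rightarrow> 's \<Rightarrow> real" where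
  "reach_within P \<sigma> T 0 s = (if s \<in> T then 1 else 0)"
| "reach_within P \<sigma> T (Suc n) s =
     (if s \<in> T then 1 else (\<Sum>s'\<in>UNIV. P s (\<sigma> s) s' * reach_within P \<sigma> T n s'))"

definition Pr_reach :: "('s::finite \<Rightarrow> 'a::finite \<Rightarrow> 's \<Rightarrow> real) \<Rightarrow> ('s \<Rightarrow> 'a) \<Rightarrow> 's set \<Rightarrow> 's \<Rightarrow> real" where
  "Pr_reach P \<sigma> T s = (SUP n. reach_within P \<sigma> T n s)"

definition Pr_max :: "('s::finite \<Rightarrow> 'a::finite \<Rightarrow> 's \<Rightarrow> real) \<Rightarrow> 's set \<Rightarrow> 's \<Rightarrow> real" where
  "Pr_max P T s = Max ((\<lambda>\<sigma>. Pr_reach P \<sigma> T s) ` {\<sigma>. is_strategy P \<sigma>})"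

definition B_max :: "('s::finite \<Rightarrow> 'a::finite \<Rightarrow> 's \<Rightarrow> real) \<Rightarrow> 's set \<Rightarrow> ('s \<Rightarrow> real) \<Rightarrow> 's \<Rightarrow> real" where
  "B_max P T x s = (if s \<in> T then 1
      else Max ((\<lambda>a. \<Sum>s'\<in>Post P s a. P s a s' * x s') ` Act P s))"

definition Act_incr :: "('s::finite \<Rightarrow> 'a::finite \<Rightarrow> 's \<Rightarrow> real) \<Rightarrow> ('s \<Rightarrow> real) \<Rightarrow> 's \<Rightarrow> 'a set" where
  "Act_incr P x s = {a \<in> Act P s. x s \<le> (\<Sum>s'\<in>Post P s a. P s a s' * x s')}"

text \<open>D^min_x on N_\<infinity> = enat (Inf {} = \<infinity>, 1 + \<infinity> = \<infinity>).\<close>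
definition D_min :: "('s::finite \<Rightarrow> 'a::finite \<Rightarrow> 's \<Rightarrow> real) \<Rightarrow> 's set \<Rightarrow> ('s \<Rightarrow> real) \<Rightarrow> ('s \<Rightarrow> enat) \<Rightarrow> 's \<Rightarrow> enat" where
  "D_min P T x r s = (if s \<in> T then 0
      else 1 + (INF a\<in>Act_incr P x s. INF s'\<in>Post P s a. r s'))"

end

theory Submission
  imports Defs
begin

lemma sum_Post_UNIV:
  assumes mdp: "is_mdp P"
  shows "(\<Sum>s'\<in>Post P s a. P s a s' * f s') = (\<Sum>s'\<in>UNIV. P s a s' * f s')"
proof -
  have "(\<Sum>s'\<in>UNIV. P s a s' * f s') = (\<Sum>s'\<in>Post P s a. P s a s' * f s')"
  proof (rule sum.mono_neutral_right)
    show "\<forall>i\<in>UNIV - Post P s a. P s a i * f i = 0"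
      using mdp unfolding is_mdp_def Post_def by (auto simp: order.order_iff_strict)
  qed auto
  then show ?thesis by simp
qed

lemma reach_bounds:
  assumes mdp: "is_mdp P" and st: "is_strategy P \<sigma>"
  shows "0 \<le> reach_within P \<sigma> T n s \<and> reach_within P \<sigma> T n s \<le> 1"
proof (induction n arbitrary: s)
  case 0
  then show ?case by simp
next
  case (Suc n)
  have P0: "\<And>t. 0 \<le> P s (\<sigma> s) t" using mdp unfolding is_mdp_def by auto
  have P1: "(\<Sum>t\<in>UNIV. P s (\<sigma> s) t) = 1" using st unfolding is_strategy_def Act_def by auto
  have "0 \<le> (\<Sum>t\<in>UNIV. P s (\<sigma> s) t * reach_within P \<sigma> T n t)"
    using P0 Suc.IH by (intro sum_nonneg) auto
  moreover have "(\<Sum>t\<in>UNIV. P s (\<sigma> s) t * reach_within P \<sigma> T n t) \<le> (\<Sum>t\<in>UNIV. P s (\<sigma> s) t)"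
    using P0 Suc.IH by (intro sum_mono) (simp add: mult_left_le)
  ultimately show ?case using P1 by simp
qed

lemma reach_mono:
  assumes mdp: "is_mdp P"
  shows "reach_within P \<sigma> T n s \<le> reach_within P \<sigma> T (Suc n) s"
proof (induction n arbitrary: s)
  case 0
  have P0: "\<And>t. 0 \<le> P s (\<sigma> s) t" using mdp unfolding is_mdp_def by auto
  have "0 \<le> (\<Sum>t\<in>UNIV. P s (\<sigma> s) t * reach_within P \<sigma> T 0 t)"
    using P0 by (intro sum_nonneg) auto
  then show ?case by simp
next
  case (Suc n)
  have P0: "\<And>t. 0 \<le> P s (\<sigma> s) t" using mdp unfolding is_mdp_def by auto
  have "(\<Sum>t\<in>UNIV. P s (\<sigma> s) t * reach_within P \<sigma> T n t)
      \<le> (\<Sum>t\<in>UNIV. P s (\<sigma> s) t * reach_within P \<sigma> T (Suc n) t)"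
    using P0 Suc.IH by (intro sum_mono mult_left_mono) auto
  then show ?case by (simp only: reach_within.simps) simp
qed

lemma reach_lim:
  assumes mdp: "is_mdp P" and st: "is_strategy P \<sigma>"
  shows "(\<lambda>n. reach_within P \<sigma> T n s) \<longlonglongrightarrow> Pr_reach P \<sigma> T s"
  unfolding Pr_reach_def
proof (rule LIMSEQ_incseq_SUP)
  show "bdd_above (range (\<lambda>n. reach_within P \<sigma> T n s))"
    using reach_bounds[OF mdp st] by (auto intro!: bdd_aboveI)
  show "incseq (\<lambda>n. reach_within P \<sigma> T n s)"
    using reach_mono[OF mdp] by (intro incseq_SucI) auto
qed

lemma Pr_reach_bounds:
  assumes mdp: "is_mdp P" and st: "is_strategy P \<sigma>"
  shows "0 \<le> Pr_reach P \<sigma> T s \<and> Pr_reach P \<sigma> T s \<le> 1"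
proof -
  have L: "(\<lambda>n. reach_within P \<sigma> T n s) \<longlonglongrightarrow> Pr_reach P \<sigma> T s" by (rule reach_lim[OF mdp st])
  have "0 \<le> Pr_reach P \<sigma> T s"
    by (rule LIMSEQ_le_const[OF L]) (use reach_bounds[OF mdp st] in auto)
  moreover have "Pr_reach P \<sigma> T s \<le> 1"
    by (rule LIMSEQ_le_const2[OF L]) (use reach_bounds[OF mdp st] in auto)
  ultimately show ?thesis by simp
qed

lemma Pr_reach_T:
  assumes "s \<in> T"
  shows "Pr_reach P \<sigma> T s = 1"
proof -
  have "\<And>n. reach_within P \<sigma> T n s = 1" using assms by (case_tac n) auto
  then show ?thesis unfolding Pr_reach_def by simp
qed

lemma Pr_reach_fix:
  assumes mdp: "is_mdp P" and st: "is_strategy P \<sigma>" and sT: "s \<notin> T"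
  shows "Pr_reach P \<sigma> T s = (\<Sum>t\<in>UNIV. P s (\<sigma> s) t * Pr_reach P \<sigma> T t)"
proof -
  have A: "(\<lambda>n. reach_within P \<sigma> T (Suc n) s) \<longlonglongrightarrow> Pr_reach P \<sigma> T s"
    using LIMSEQ_Suc[OF reach_lim[OF mdp st]] .
  have B: "(\<lambda>n. reach_within P \<sigma> T (Suc n) s) \<longlonglongrightarrow> (\<Sum>t\<in>UNIV. P s (\<sigma> s) t * Pr_reach P \<sigma> T t)"
    using sT by (simp only: reach_within.simps if_False)
       (intro tendsto_sum tendsto_mult_left reach_lim[OF mdp st])
  show ?thesis using LIMSEQ_unique[OF A B] .
qed

theorem proposition6:
  fixes P :: "'s::finite \<Rightarrow> 'a::finite \<Rightarrow> 's \<Rightarrow> real"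
    and T :: "'s set" and x :: "'s \<Rightarrow> real" and r :: "'s \<Rightarrow> enat"
  assumes mdp: "is_mdp P"
    and x_range: "\<forall>s. 0 \<le> x s \<and> x s \<le> 1"
    and h1: "\<forall>s. D_min P T x r s \<le> r s"
    and h2: "\<forall>s. x s \<le> B_max P T x s"
    and h3: "\<forall>s. s \<notin> T \<longrightarrow> x s > 0 \<longrightarrow> r s < \<infinity>"
  shows "\<forall>s. Pr_max P T s \<ge> x s"
proof -
  have good: "\<exists>a. a \<in> Act_incr P x s \<and> (\<exists>s'\<in>Post P s a. r s' < r s)"
    if sT: "s \<notin> T" and xs: "x s > 0" for s
  proof -
    define m where "m = (INF a\<in>Act_incr P x s. INF s'\<in>Post P s a. r s')"
    have "1 + m \<le> r s" using h1 sT unfolding D_min_def m_def by (metis)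
    moreover have "r s < \<infinity>" using h3 sT xs by auto
    ultimately have "m < r s"
      by (cases m; cases "r s") (auto simp: one_enat_def)
    then show ?thesis unfolding m_def by (auto simp: INF_less_iff)
  qed
  have ex_act: "\<exists>a. a \<in> Act P s" for s using mdp unfolding is_mdp_def Act_def by auto
  define \<sigma> where "\<sigma> s = (if s \<notin> T \<and> x s > 0
     then (SOME a. a \<in> Act_incr P x s \<and> (\<exists>s'\<in>Post P s a. r s' < r s))
     else (SOME a. a \<in> Act P s))" for s
  have \<sigma>good: "\<sigma> s \<in> Act_incr P x s \<and> (\<exists>s'\<in>Post P s (\<sigma> s). r s' < r s)"
    if "s \<notin> T" "x s > 0" for s
    using someI_ex[OF good[OF that]] that unfolding \<sigma>_def by simp
  have st: "is_strategy P \<sigma>"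
    unfolding is_strategy_def
  proof
    fix s
    show "\<sigma> s \<in> Act P s"
    proof (cases "s \<notin> T \<and> x s > 0")
      case True
      then show ?thesis using \<sigma>good[of s] unfolding Act_incr_def by auto
    next
      case False
      then show ?thesis unfolding \<sigma>_def using someI_ex[OF ex_act[of s]] by auto
    qed
  qed
  have P0: "\<And>s a t. 0 \<le> P s a t" using mdp unfolding is_mdp_def by auto
  have P1: "\<And>s. (\<Sum>t\<in>UNIV. P s (\<sigma> s) t) = 1" using st unfolding is_strategy_def Act_def by auto
  have sub: "x s \<le> (\<Sum>t\<in>UNIV. P s (\<sigma> s) t * x t)" if "s \<notin> T" for s
  proof (cases "x s > 0")
    case True
    then show ?thesis using \<sigma>good[OF that True] sum_Post_UNIV[OF mdp]
      unfolding Act_incr_def by auto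
  next
    case False
    then have "x s \<le> 0" by simp
    also have "0 \<le> (\<Sum>t\<in>UNIV. P s (\<sigma> s) t * x t)"
      using P0 x_range by (intro sum_nonneg) auto
    finally show ?thesis .
  qed
  define y where "y s = Pr_reach P \<sigma> T s" for s
  define d where "d s = x s - y s" for s
  define m where "m = Max (range d)"
  have dm: "d s \<le> m" for s unfolding m_def by simp
  have m_le: "m \<le> 0"
  proof (rule ccontr)
    assume "\<not> m \<le> 0"
    then have mpos: "m > 0" by simp
    have "m \<in> range d" unfolding m_def by (intro Max_in) auto
    then have ex: "\<exists>k. k \<in> r ` {s. d s = m}" by auto
    obtain k where k: "k \<in> r ` {s. d s = m}" and kmin: "\<And>k'. k' < k \<Longrightarrow> k' \<notin> r ` {s. d s = m}"
      using ex exists_least_iff[of "\<lambda>k. k \<in> r ` {s. d s = m}"] by blast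
    obtain s0 where s0: "d s0 = m" "r s0 = k" using k by auto
    have s0T: "s0 \<notin> T"
    proof
      assume "s0 \<in> T"
      then have "d s0 \<le> 0" using x_range Pr_reach_T unfolding d_def y_def by (simp add: Pr_reach_T)
      then show False using s0 mpos by simp
    qed
    have xs0: "x s0 > 0"
      using s0 mpos Pr_reach_bounds[OF mdp st, of T s0] unfolding d_def y_def by simp
    obtain s' where s'P: "s' \<in> Post P s0 (\<sigma> s0)" and rs': "r s' < r s0"
      using \<sigma>good[OF s0T xs0] by auto
    have "d s0 \<le> (\<Sum>t\<in>UNIV. P s0 (\<sigma> s0) t * d t)"
    proof -
      have "(\<Sum>t\<in>UNIV. P s0 (\<sigma> s0) t * d t) = (\<Sum>t\<in>UNIV. P s0 (\<sigma> s0) t * x t) - (\<Sum>t\<in>UNIV. P s0 (\<sigma> s0) t * y t)"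
        unfolding d_def by (simp add: right_diff_distrib sum_subtractf)
      also have "(\<Sum>t\<in>UNIV. P s0 (\<sigma> s0) t * y t) = y s0"
        unfolding y_def using Pr_reach_fix[OF mdp st s0T] by simp
      finally show ?thesis using sub[OF s0T] unfolding d_def by simp
    qed
    then have "0 \<le> (\<Sum>t\<in>UNIV. P s0 (\<sigma> s0) t * d t) - m * (\<Sum>t\<in>UNIV. P s0 (\<sigma> s0) t)"
      using s0 P1 by simp
    also have "\<dots> = - (\<Sum>t\<in>UNIV. P s0 (\<sigma> s0) t * (m - d t))"
      by (simp add: sum_distrib_left right_diff_distrib sum_subtractf algebra_simps)
    finally have "(\<Sum>t\<in>UNIV. P s0 (\<sigma> s0) t * (m - d t)) \<le> 0" by simp
    moreover have nn: "\<And>t. t \<in> UNIV \<Longrightarrow> 0 \<le> P s0 (\<sigma> s0) t * (m - d t)"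
      using P0 dm by simp
    ultimately have "(\<Sum>t\<in>UNIV. P s0 (\<sigma> s0) t * (m - d t)) = 0"
      by (meson order.antisym sum_nonneg)
    then have "\<forall>t\<in>UNIV. P s0 (\<sigma> s0) t * (m - d t) = 0"
      using sum_nonneg_eq_0_iff[of UNIV "\<lambda>t. P s0 (\<sigma> s0) t * (m - d t)"] nn by simp
    then have "P s0 (\<sigma> s0) s' * (m - d s') = 0" by simp
    moreover have "P s0 (\<sigma> s0) s' > 0" using s'P unfolding Post_def by simp
    ultimately have "d s' = m" by simp
    then have "r s' \<in> r ` {s. d s = m}" by auto
    then show False using kmin rs' s0 by auto
  qed
  show ?thesis
  proof
    fix s
    have "x s \<le> y s" using dm[of s] m_le unfolding d_def by simp
    also have "y s \<le> Pr_max P T s"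
      unfolding y_def Pr_max_def using st by (intro Max_ge) auto
    finally show "x s \<le> Pr_max P T s" .
  qed
qed

end
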